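(* Let ${\bm X}={\bm Y}$ be a finite pseudometric space with pseudometric $d_{\bm X}$ and let $C=d_{\bm X}$. Let $m^{\bm X}_\bullet,m^{\bm Y}_\bullet$ be irreducible and aperiodic Markov transition kernels on ${\bm X}$ with unique stationary distributions $\mu^{\bm X},\mu^{\bm Y}$. Define $C^{(0)}=C$ and $C^{(l)}_{ij}=d_{\mathrm W}(m^{\bm X}_i,m^{\bm Y}_j;C^{(l-1)})$ for $l\ge1$, and let $c=d^{(\infty)}_{\mathrm{WL}}\big(({\bm X},m^{\bm X}_\bullet,\mu^{\bm X}),({\bm Y},m^{\bm Y}_\bullet,\mu^{\bm Y});C\big)$. Then there exists $\rho\in[0,1)$, depending on $m^{\bm X}_\bullet$ and $m^{\bm Y}_\bullet$, such that for all $k\in\mathbb{N}$ and all $i,j$, $|C^{(k)}_{ij}-c|\le2\rho^k\|C\|_\infty$.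
   Context: $d_{\mathrm W}(\alpha,\beta;D)=\inf_{(X,Y)\in\mathcal{C}(\alpha,\beta)}\mathbb{E}\,D(X,Y)$ with $\mathcal{C}(\alpha,\beta)$ the set of couplings. For finite Markov chains $\mathcal{X}=({\bm X},m^{\bm X}_\bullet,\nu^{\bm X})$, $\mathcal{Y}=({\bm Y},m^{\bm Y}_\bullet,\nu^{\bm Y})$, a Markovian coupling is a (possibly time-inhomogeneous) Markov chain $(X_t,Y_t)_{t\in\mathbb{N}}$ on ${\bm X}\times{\bm Y}$ with $\mathrm{law}(X_0,Y_0)\in\mathcal{C}(\nu^{\bm X},\nu^{\bm Y})$ and, for all $t,x,y$, the conditional law of $(X_{t+1},Y_{t+1})$ given $(X_t,Y_t)=(x,y)$ in $\mathcal{C}(m^{\bm X}_x,m^{\bm Y}_y)$. $d^{(k)}_{\mathrm{WL}}(\mathcal{X},\mathcal{Y};C)=\inf\mathbb{E}\,C(X_k,Y_k)$ over Markovian couplings, and (for stationary chains) $d^{(\infty)}_{\mathrm{WL}}=\sup_{k}d^{(k)}_{\mathrm{WL}}=\lim_k d^{(k)}_{\mathrm{WL}}$. $\|C\|_\infty=\max_{i,j}|C_{ij}|$. *)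

theory Defs
  imports Complex_Main
begin

definition markov_kernel :: "('a::finite \<Rightarrow> 'a \<Rightarrow> real) \<Rightarrow> bool" where
  "markov_kernel m \<longleftrightarrow> (\<forall>x y. 0 \<le> m x y) \<and> (\<forall>x. (\<Sum>y\<in>UNIV. m x y) = 1)"

definition prob_vec :: "('a::finite \<Rightarrow> real) \<Rightarrow> bool" where
  "prob_vec \<mu> \<longleftrightarrow> (\<forall>x. 0 \<le> \<mu> x) \<and> (\<Sum>x\<in>UNIV. \<mu> x) = 1"

fun mpow :: "('a::finite \<Rightarrow> 'a \<Rightarrow> real) \<Rightarrow> nat \<Rightarrow> 'a \<Rightarrow> 'a \<Rightarrow> real" where
  "mpow m 0 = (\<lambda>x y. if x = y then 1 else 0)"
| "mpow m (Suc n) = (\<lambda>x z. \<Sum>y\<in>UNIV. mpow m n x y * m y z)"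

definition irreducible_kernel :: "('a::finite \<Rightarrow> 'a \<Rightarrow> real) \<Rightarrow> bool" where
  "irreducible_kernel m \<longleftrightarrow> (\<forall>x y. \<exists>n>0. mpow m n x y > 0)"

definition aperiodic_kernel :: "('a::finite \<Rightarrow> 'a \<Rightarrow> real) \<Rightarrow> bool" where
  "aperiodic_kernel m \<longleftrightarrow> (\<forall>x. Gcd {n. n > 0 \<and> mpow m n x x > 0} = 1)"

definition stationary :: "('a::finite \<Rightarrow> 'a \<Rightarrow> real) \<Rightarrow> ('a \<Rightarrow> real) \<Rightarrow> bool" where
  "stationary m \<mu> \<longleftrightarrow> prob_vec \<mu> \<and> (\<forall>y. (\<Sum>x\<in>UNIV. \<mu> x * m x y) = \<mu> y)"

definition pseudometric :: "('a \<Rightarrow> 'a \<Rightarrow> real) \<Rightarrow> bool" where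
  "pseudometric d \<longleftrightarrow> (\<forall>x. d x x = 0) \<and> (\<forall>x y. d x y = d y x)
     \<and> (\<forall>x y z. d x z \<le> d x y + d y z)"

definition coupling :: "('a::finite \<Rightarrow> 'b::finite \<Rightarrow> real) \<Rightarrow> ('a \<Rightarrow> real) \<Rightarrow> ('b \<Rightarrow> real) \<Rightarrow> bool" where
  "coupling p \<alpha> \<beta> \<longleftrightarrow> (\<forall>x y. 0 \<le> p x y) \<and> (\<forall>x. (\<Sum>y\<in>UNIV. p x y) = \<alpha> x)
     \<and> (\<forall>y. (\<Sum>x\<in>UNIV. p x y) = \<beta> y)"

definition dW :: "('a::finite \<Rightarrow> real) \<Rightarrow> ('b::finite \<Rightarrow> real) \<Rightarrow> ('a \<Rightarrow> 'b \<Rightarrow> real) \<Rightarrow> real" where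
  "dW \<alpha> \<beta> D = Inf {(\<Sum>x\<in>UNIV. \<Sum>y\<in>UNIV. p x y * D x y) | p. coupling p \<alpha> \<beta>}"

text \<open>Law at time t of a (time-inhomogeneous) Markov chain on the product space with
  initial law pi0 and transition kernels P t (x,y) (x',y').\<close>
fun claw :: "('a::finite \<Rightarrow> 'b::finite \<Rightarrow> real) \<Rightarrow> (nat \<Rightarrow> 'a \<Rightarrow> 'b \<Rightarrow> 'a \<Rightarrow> 'b \<Rightarrow> real)
              \<Rightarrow> nat \<Rightarrow> 'a \<Rightarrow> 'b \<Rightarrow> real" where
  "claw pi0 P 0 = pi0"
| "claw pi0 P (Suc t) = (\<lambda>x' y'. \<Sum>x\<in>UNIV. \<Sum>y\<in>UNIV. claw pi0 P t x y * P t x y x' y')"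

definition markovian_coupling ::
  "('a::finite \<Rightarrow> 'a \<Rightarrow> real) \<Rightarrow> ('a \<Rightarrow> real) \<Rightarrow> ('b::finite \<Rightarrow> 'b \<Rightarrow> real) \<Rightarrow> ('b \<Rightarrow> real)
   \<Rightarrow> ('a \<Rightarrow> 'b \<Rightarrow> real) \<Rightarrow> (nat \<Rightarrow> 'a \<Rightarrow> 'b \<Rightarrow> 'a \<Rightarrow> 'b \<Rightarrow> real) \<Rightarrow> bool" where
  "markovian_coupling mx nux my nuy pi0 P \<longleftrightarrow> coupling pi0 nux nuy
     \<and> (\<forall>t x y. coupling (P t x y) (mx x) (my y))"

definition dWL_k ::
  "nat \<Rightarrow> ('a::finite \<Rightarrow> 'a \<Rightarrow> real) \<Rightarrow> ('a \<Rightarrow> real) \<Rightarrow> ('b::finite \<Rightarrow> 'b \<Rightarrow> real) \<Rightarrow> ('b \<Rightarrow> real)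
   \<Rightarrow> ('a \<Rightarrow> 'b \<Rightarrow> real) \<Rightarrow> real" where
  "dWL_k k mx nux my nuy C = Inf {(\<Sum>x\<in>UNIV. \<Sum>y\<in>UNIV. claw pi0 P k x y * C x y) | pi0 P.
        markovian_coupling mx nux my nuy pi0 P}"

definition dWL_inf ::
  "('a::finite \<Rightarrow> 'a \<Rightarrow> real) \<Rightarrow> ('a \<Rightarrow> real) \<Rightarrow> ('b::finite \<Rightarrow> 'b \<Rightarrow> real) \<Rightarrow> ('b \<Rightarrow> real)
   \<Rightarrow> ('a \<Rightarrow> 'b \<Rightarrow> real) \<Rightarrow> real" where
  "dWL_inf mx nux my nuy C = (SUP k. dWL_k k mx nux my nuy C)"

fun Citer :: "('a::finite \<Rightarrow> 'a \<Rightarrow> real) \<Rightarrow> ('b::finite \<Rightarrow> 'b \<Rightarrow> real) \<Rightarrow> ('a \<Rightarrow> 'b \<Rightarrow> real)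
              \<Rightarrow> nat \<Rightarrow> 'a \<Rightarrow> 'b \<Rightarrow> real" where
  "Citer mx my C 0 = C"
| "Citer mx my C (Suc l) = (\<lambda>i j. dW (mx i) (my j) (Citer mx my C l))"

definition sup_norm :: "('a::finite \<Rightarrow> 'b::finite \<Rightarrow> real) \<Rightarrow> real" where
  "sup_norm C = Max {\<bar>C i j\<bar> | i j. True}"

end

theory Submission
  imports Defs
begin

lemma sum_ind_r[simp]: "(\<Sum>y\<in>(UNIV::'a::finite set). f y * (if y = z then 1 else 0)) = (f z::real)"
  by (simp add: if_distrib[where f="\<lambda>t. f _ * t"] sum.delta' cong: if_cong)
lemma sum_ind_l[simp]: "(\<Sum>y\<in>(UNIV::'a::finite set). (if x = y then 1 else 0) * f y) = (f x::real)"
  by (simp add: if_distrib[where f="\<lambda>t. t * f _"] sum.delta cong: if_cong)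

lemma numsemigroup:
  fixes S :: "nat set"
  assumes add: "\<And>a b. a \<in> S \<Longrightarrow> b \<in> S \<Longrightarrow> a + b \<in> S"
    and pos: "\<And>a. a \<in> S \<Longrightarrow> 0 < a" and ne: "S \<noteq> {}" and g1: "Gcd S = 1"
  shows "\<exists>N. \<forall>n\<ge>N. n \<in> S"
proof -
  have mult: "q * a \<in> S" if "a \<in> S" "0 < q" for q a
    using that(2)
  proof (induction q)
    case 0 then show ?case by simp
  next
    case (Suc q)
    then show ?case using add[OF that(1)] that(1) by (cases "q = 0") auto
  qed
  define K where "K = {k. 0 < k \<and> (\<exists>a\<in>S. \<exists>b\<in>S. a = b + k)}"
  obtain s where s: "s \<in> S" using ne by blast
  have "s \<in> K" unfolding K_def using s add[OF s s] pos[OF s] by auto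
  define g where "g = (LEAST k. k \<in> K)"
  have gK: "g \<in> K" unfolding g_def using \<open>s \<in> K\<close> by (rule LeastI)
  have gmin: "g \<le> k" if "k \<in> K" for k unfolding g_def using that by (rule Least_le)
  obtain a0 b0 where a0: "a0 \<in> S" and b0: "b0 \<in> S" and ab: "a0 = b0 + g" and gpos: "0 < g"
    using gK unfolding K_def by auto
  have gdvd: "g dvd t" if t: "t \<in> S" for t
  proof (rule ccontr)
    assume nd: "\<not> g dvd t"
    define q where "q = t div g"
    define r where "r = t mod g"
    have tq: "t = q * g + r" unfolding q_def r_def by simp
    have rg: "r < g" unfolding r_def using gpos by simp
    have r0: "r \<noteq> 0" using nd unfolding r_def by (simp add: dvd_eq_mod_eq_0)
    have "r \<in> K"
    proof (cases "q = 0")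
      case True
      then have "t = r" using tq by simp
      then show ?thesis unfolding K_def using t add[OF t t] r0 by auto
    next
      case False
      have A: "t + q * b0 \<in> S" using add[OF t mult[OF b0]] False by simp
      have B: "q * a0 \<in> S" using mult[OF a0] False by simp
      have "t + q * b0 = q * a0 + r" using tq ab by (simp add: algebra_simps)
      then show ?thesis unfolding K_def using A B r0 by auto
    qed
    then show False using gmin rg by fastforce
  qed
  have "g dvd Gcd S" by (rule Gcd_greatest) (rule gdvd)
  then have "g = 1" using g1 by simp
  then have ab1: "a0 = b0 + 1" using ab by simp
  have b0pos: "0 < b0" using pos[OF b0] .
  show ?thesis
  proof (intro exI allI impI)
    fix n assume n: "b0 * b0 \<le> n"
    define q where "q = n div b0"
    define r where "r = n mod b0"
    have nq: "n = q * b0 + r" unfolding q_def r_def by simp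
    have rb: "r < b0" unfolding r_def using b0pos by simp
    have "b0 * b0 div b0 \<le> q" unfolding q_def using n by (rule div_le_mono)
    then have qb: "b0 \<le> q" using b0pos by simp
    have eq: "n = (q - r) * b0 + r * a0" using nq ab1 rb qb by (simp add: algebra_simps)
    have s1: "(q - r) * b0 \<in> S" using mult[OF b0] rb qb by simp
    show "n \<in> S"
    proof (cases "r = 0")
      case True then show ?thesis using eq s1 by simp
    next
      case False
      then have "r * a0 \<in> S" using mult[OF a0] by simp
      then show ?thesis using eq s1 add by metis
    qed
  qed
qed

lemma mpow_add: "mpow m (a + b) x z = (\<Sum>y\<in>UNIV. mpow m a x y * mpow m b y z)"
proof (induction b arbitrary: z)
  case 0
  then show ?case by simp
next
  case (Suc b)
  have "mpow m (a + Suc b) x z = (\<Sum>y\<in>UNIV. (\<Sum>w\<in>UNIV. mpow m a x w * mpow m b w y) * m y z)"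
    using Suc by simp
  also have "\<dots> = (\<Sum>w\<in>UNIV. mpow m a x w * (\<Sum>y\<in>UNIV. mpow m b w y * m y z))"
    by (simp add: sum_distrib_left sum_distrib_right mult.assoc) (rule sum.swap)
  finally show ?case by simp
qed

lemma mpow_nonneg: "markov_kernel m \<Longrightarrow> 0 \<le> mpow m n x y"
  by (induction n arbitrary: y) (auto simp: markov_kernel_def intro!: sum_nonneg)

lemma mpow_row: "markov_kernel m \<Longrightarrow> (\<Sum>y\<in>UNIV. mpow m n x y) = 1"
proof (induction n)
  case 0 then show ?case by simp
next
  case (Suc n)
  have "(\<Sum>z\<in>UNIV. mpow m (Suc n) x z) = (\<Sum>y\<in>UNIV. mpow m n x y * (\<Sum>z\<in>UNIV. m y z))"
    by (simp add: sum_distrib_left) (rule sum.swap)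
  also have "\<dots> = 1" using Suc by (simp add: markov_kernel_def)
  finally show ?case .
qed

lemma mpow_Suc_left: "mpow m (Suc n) x z = (\<Sum>y\<in>UNIV. m x y * mpow m n y z)"
  using mpow_add[of m 1 n x z] by simp

lemma primitive:
  assumes mk: "markov_kernel m" and irr: "irreducible_kernel m" and ap: "aperiodic_kernel m"
  shows "\<exists>N. \<forall>n\<ge>N. \<forall>x y. 0 < mpow m n x y"
proof -
  have ge: "mpow m a x y * mpow m b y z \<le> mpow m (a + b) x z" for a b x y z
    unfolding mpow_add using mk
    by (intro member_le_sum) (auto intro!: mult_nonneg_nonneg mpow_nonneg)
  have "\<exists>N. \<forall>n\<ge>N. n \<in> {n. 0 < n \<and> 0 < mpow m n x x}" for x
  proof (rule numsemigroup)
    fix a b assume "a \<in> {n. 0 < n \<and> 0 < mpow m n x x}" "b \<in> {n. 0 < n \<and> 0 < mpow m n x x}"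
    then show "a + b \<in> {n. 0 < n \<and> 0 < mpow m n x x}"
    proof -
      have "0 < mpow m a x x * mpow m b x x" using \<open>a \<in> _\<close> \<open>b \<in> _\<close> by simp
      then show ?thesis using ge[of a x x b x] \<open>a \<in> _\<close> by simp
    qed
  next
    show "{n. 0 < n \<and> 0 < mpow m n x x} \<noteq> {}" using irr unfolding irreducible_kernel_def by blast
  next
    show "Gcd {n. 0 < n \<and> 0 < mpow m n x x} = 1" using ap unfolding aperiodic_kernel_def by simp
  qed auto
  then have "\<forall>x. \<exists>N. \<forall>n\<ge>N. 0 < mpow m n x x" by blast
  from choice[OF this] obtain Nx where Nx0: "\<forall>x. \<forall>n\<ge>Nx x. 0 < mpow m n x x" by blast
  then have Nx: "\<And>x n. Nx x \<le> n \<Longrightarrow> 0 < mpow m n x x" by blast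
  have "\<forall>p. \<exists>n. 0 < mpow m n (fst p) (snd p)"
    using irr unfolding irreducible_kernel_def by blast
  from choice[OF this] obtain f where f: "\<forall>p. 0 < mpow m (f p) (fst p) (snd p)" by blast
  define r where "r x y = f (x, y)" for x y
  have r: "\<And>x y. 0 < mpow m (r x y) x y" unfolding r_def using f by (metis fst_conv snd_conv)
  define N where "N = Max (range (\<lambda>(x,y). Nx x + r x y))"
  have NN: "Nx x + r x y \<le> N" for x y
    unfolding N_def by (rule Max_ge) auto
  show ?thesis
  proof (intro exI allI impI)
    fix n x y assume n: "N \<le> n"
    have "0 < mpow m (n - r x y) x x * mpow m (r x y) x y"
      using Nx[of x "n - r x y"] NN[of x y] n r[of x y] by simp
    also have "\<dots> \<le> mpow m (n - r x y + r x y) x y" by (rule ge)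
    also have "n - r x y + r x y = n" using NN[of x y] n by simp
    finally show "0 < mpow m n x y" .
  qed
qed


abbreviation ev :: "('a::finite \<Rightarrow> 'b::finite \<Rightarrow> real) \<Rightarrow> ('a \<Rightarrow> 'b \<Rightarrow> real) \<Rightarrow> real" where
  "ev p D \<equiv> \<Sum>x\<in>UNIV. \<Sum>y\<in>UNIV. p x y * D x y"

lemma quad_swap:
  "(\<Sum>x\<in>UNIV. \<Sum>y\<in>UNIV. \<Sum>x'\<in>UNIV. \<Sum>y'\<in>UNIV. f x y x' y') =
   (\<Sum>x'\<in>UNIV. \<Sum>y'\<in>UNIV. \<Sum>x\<in>UNIV. \<Sum>y\<in>UNIV. (f x y x' y' :: real))"
proof -
  have "(\<Sum>x\<in>UNIV. \<Sum>y\<in>UNIV. \<Sum>x'\<in>UNIV. \<Sum>y'\<in>UNIV. f x y x' y') =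
        (\<Sum>x\<in>UNIV. \<Sum>x'\<in>UNIV. \<Sum>y\<in>UNIV. \<Sum>y'\<in>UNIV. f x y x' y')"
    by (rule sum.cong[OF refl], rule sum.swap)
  also have "\<dots> = (\<Sum>x'\<in>UNIV. \<Sum>x\<in>UNIV. \<Sum>y\<in>UNIV. \<Sum>y'\<in>UNIV. f x y x' y')"
    by (rule sum.swap)
  also have "\<dots> = (\<Sum>x'\<in>UNIV. \<Sum>x\<in>UNIV. \<Sum>y'\<in>UNIV. \<Sum>y\<in>UNIV. f x y x' y')"
    by (rule sum.cong[OF refl], rule sum.cong[OF refl], rule sum.swap)
  also have "\<dots> = (\<Sum>x'\<in>UNIV. \<Sum>y'\<in>UNIV. \<Sum>x\<in>UNIV. \<Sum>y\<in>UNIV. f x y x' y')"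
    by (rule sum.cong[OF refl], rule sum.swap)
  finally show ?thesis .
qed

lemma kern_pv: "markov_kernel m \<Longrightarrow> prob_vec (m x)"
  unfolding markov_kernel_def prob_vec_def by simp

lemma coupling_mass: "coupling p \<alpha> \<beta> \<Longrightarrow> prob_vec \<alpha> \<Longrightarrow> (\<Sum>x\<in>UNIV. \<Sum>y\<in>UNIV. p x y) = 1"
  unfolding coupling_def prob_vec_def by simp

lemma ev_const: "coupling p \<alpha> \<beta> \<Longrightarrow> prob_vec \<alpha> \<Longrightarrow> ev p (\<lambda>x y. c) = c"
  using coupling_mass[of p \<alpha> \<beta>] by (simp add: sum_distrib_right[symmetric])

lemma ev_lower:
  assumes "coupling p \<alpha> \<beta>" "prob_vec \<alpha>" "\<And>x y. L \<le> D x y"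
  shows "L \<le> ev p D"
proof -
  have "ev p (\<lambda>x y. L) \<le> ev p D"
    using assms(1,3) unfolding coupling_def
    by (intro sum_mono mult_left_mono) auto
  then show ?thesis using ev_const[OF assms(1,2)] by simp
qed

lemma ev_upper:
  assumes "coupling p \<alpha> \<beta>" "prob_vec \<alpha>" "\<And>x y. D x y \<le> U"
  shows "ev p D \<le> U"
proof -
  have "ev p D \<le> ev p (\<lambda>x y. U)"
    using assms(1,3) unfolding coupling_def
    by (intro sum_mono mult_left_mono) auto
  then show ?thesis using ev_const[OF assms(1,2)] by simp
qed

lemma ev_add_const:
  assumes "coupling p \<alpha> \<beta>" "prob_vec \<alpha>"
  shows "ev p (\<lambda>x y. D x y + c) = ev p D + c"
proof -
  have "ev p (\<lambda>x y. D x y + c) = ev p D + ev p (\<lambda>x y. c)"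
    by (simp add: distrib_left sum.distrib)
  then show ?thesis using ev_const[OF assms] by simp
qed

lemma indep_coupling:
  assumes "prob_vec \<alpha>" "prob_vec \<beta>"
  shows "coupling (\<lambda>x y. \<alpha> x * \<beta> y) \<alpha> \<beta>"
  using assms unfolding coupling_def prob_vec_def
  by (simp add: sum_distrib_left[symmetric] sum_distrib_right[symmetric])

lemma bdd_D: "\<exists>L. \<forall>x y. L \<le> (D::'a::finite \<Rightarrow> 'b::finite \<Rightarrow> real) x y"
proof -
  have "Min (range (\<lambda>(x,y). D x y)) \<le> D x y" for x y
    by (rule Min_le) auto
  then show ?thesis by blast
qed

lemma dW_lower_bound:
  assumes "prob_vec \<alpha>" "prob_vec \<beta>" "\<And>x y. L \<le> D x y"
  shows "L \<le> dW \<alpha> \<beta> D"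
  unfolding dW_def
proof (rule cInf_greatest)
  show "{ev p D |p. coupling p \<alpha> \<beta>} \<noteq> {}" using indep_coupling[OF assms(1,2)] by blast
next
  fix z assume "z \<in> {ev p D |p. coupling p \<alpha> \<beta>}"
  then obtain p where "z = ev p D" "coupling p \<alpha> \<beta>" by blast
  then show "L \<le> z" using ev_lower[of p \<alpha> \<beta> L D] assms by simp
qed

lemma dW_le:
  assumes "prob_vec \<alpha>" "coupling p \<alpha> \<beta>"
  shows "dW \<alpha> \<beta> D \<le> ev p D"
  unfolding dW_def
proof (rule cInf_lower)
  show "ev p D \<in> {ev p D |p. coupling p \<alpha> \<beta>}" using assms by blast
  obtain L where L: "\<forall>x y. L \<le> D x y" using bdd_D by blast
  have "L \<le> ev q D" if "coupling q \<alpha> \<beta>" for q using ev_lower[of q \<alpha> \<beta> L D] assms that L by simp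
  then show "bdd_below {ev p D |p. coupling p \<alpha> \<beta>}"
    unfolding bdd_below_def by blast
qed

lemma dW_upper:
  assumes "prob_vec \<alpha>" "prob_vec \<beta>" "\<And>x y. D x y \<le> U"
  shows "dW \<alpha> \<beta> D \<le> U"
proof -
  have "dW \<alpha> \<beta> D \<le> ev (\<lambda>x y. \<alpha> x * \<beta> y) D" by (rule dW_le[OF assms(1) indep_coupling[OF assms(1,2)]])
  also have "\<dots> \<le> U" using ev_upper[of "\<lambda>x y. \<alpha> x * \<beta> y" \<alpha> \<beta> D U] indep_coupling[OF assms(1,2)] assms by simp
  finally show ?thesis .
qed

lemma dW_eps:
  assumes "prob_vec \<alpha>" "prob_vec \<beta>" "0 < e"
  shows "\<exists>p. coupling p \<alpha> \<beta> \<and> ev p D < dW \<alpha> \<beta> D + e"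
proof -
  have ne: "{ev p D |p. coupling p \<alpha> \<beta>} \<noteq> {}" using indep_coupling[OF assms(1,2)] by blast
  have "Inf {ev p D |p. coupling p \<alpha> \<beta>} < dW \<alpha> \<beta> D + e" unfolding dW_def using assms(3) by simp
  from cInf_lessD[OF ne this] obtain z where "z \<in> {ev p D |p. coupling p \<alpha> \<beta>}" "z < dW \<alpha> \<beta> D + e" by blast
  then show ?thesis by blast
qed

definition lo :: "('a::finite \<Rightarrow> 'b::finite \<Rightarrow> real) \<Rightarrow> real" where
  "lo D = Min (range (\<lambda>(x,y). D x y))"
definition hi :: "('a::finite \<Rightarrow> 'b::finite \<Rightarrow> real) \<Rightarrow> real" where
  "hi D = Max (range (\<lambda>(x,y). D x y))"

lemma lo_le: "lo D \<le> D x y"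
  unfolding lo_def by (rule Min_le) auto
lemma hi_ge: "D x y \<le> hi D"
  unfolding hi_def by (rule Max_ge) auto
lemma lo_ex: "\<exists>x y. D x y = lo D"
proof -
  have "lo D \<in> range (\<lambda>(x,y). D x y)" unfolding lo_def by (rule Min_in) auto
  then obtain a b where "lo D = D a b" by auto
  then show ?thesis by metis
qed
lemma hi_ex: "\<exists>x y. D x y = hi D"
proof -
  have "hi D \<in> range (\<lambda>(x,y). D x y)" unfolding hi_def by (rule Max_in) auto
  then obtain a b where "hi D = D a b" by auto
  then show ?thesis by metis
qed

lemma Citer_add: "Citer mX mY (Citer mX mY C k) n = Citer mX mY C (n + k)"
  by (induction n) auto

lemma Citer_lo:
  assumes "markov_kernel mX" "markov_kernel mY"
  shows "lo (Citer mX mY D k) \<le> lo (Citer mX mY D (Suc k))"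
proof -
  obtain x y where "Citer mX mY D (Suc k) x y = lo (Citer mX mY D (Suc k))" using lo_ex by blast
  moreover have "lo (Citer mX mY D k) \<le> Citer mX mY D (Suc k) x y"
    using dW_lower_bound[OF kern_pv[OF assms(1)] kern_pv[OF assms(2)] lo_le] by simp
  ultimately show ?thesis by simp
qed

lemma Citer_hi:
  assumes "markov_kernel mX" "markov_kernel mY"
  shows "hi (Citer mX mY D (Suc k)) \<le> hi (Citer mX mY D k)"
proof -
  obtain x y where "Citer mX mY D (Suc k) x y = hi (Citer mX mY D (Suc k))" using hi_ex by blast
  moreover have "Citer mX mY D (Suc k) x y \<le> hi (Citer mX mY D k)"
    using dW_upper[OF kern_pv[OF assms(1)] kern_pv[OF assms(2)] hi_ge] by simp
  ultimately show ?thesis by simp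
qed

lemma Citer_indep:
  assumes mk: "markov_kernel mX" "markov_kernel mY"
  shows "Citer mX mY D n i j \<le> ev (\<lambda>x y. mpow mX n i x * mpow mY n j y) D"
proof (induction n arbitrary: i j)
  case 0
  then show ?case by (simp add: mult.assoc sum_distrib_left[symmetric])
next
  case (Suc n)
  let ?p = "\<lambda>x y. mX i x * mY j y"
  have cp: "coupling ?p (mX i) (mY j)" by (rule indep_coupling[OF kern_pv[OF mk(1)] kern_pv[OF mk(2)]])
  have "Citer mX mY D (Suc n) i j \<le> ev ?p (Citer mX mY D n)"
    using dW_le[OF kern_pv[OF mk(1)] cp] by simp
  also have "\<dots> \<le> ev ?p (\<lambda>x y. ev (\<lambda>x' y'. mpow mX n x x' * mpow mY n y y') D)"
    using cp Suc unfolding coupling_def by (intro sum_mono mult_left_mono) auto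
  also have "\<dots> = (\<Sum>x'\<in>UNIV. \<Sum>y'\<in>UNIV. \<Sum>x\<in>UNIV. \<Sum>y\<in>UNIV.
        mX i x * mY j y * (mpow mX n x x' * mpow mY n y y' * D x' y'))"
    by (simp only: sum_distrib_left) (rule quad_swap)
  also have "\<dots> = ev (\<lambda>x' y'. (\<Sum>x\<in>UNIV. mX i x * mpow mX n x x') * (\<Sum>y\<in>UNIV. mY j y * mpow mY n y y')) D"
    apply (simp add: sum_distrib_left sum_distrib_right mult_ac)
    apply (rule sum.cong[OF refl], rule sum.cong[OF refl], rule sum.swap)
    done
  also have "\<dots> = ev (\<lambda>x' y'. mpow mX (Suc n) i x' * mpow mY (Suc n) j y') D"
    unfolding mpow_Suc_left ..
  finally show ?case .
qed


lemma claw_step: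
  "ev (claw pi0 P (Suc t)) D = ev (claw pi0 P t) (\<lambda>x y. ev (P t x y) D)"
proof -
  have "ev (claw pi0 P (Suc t)) D = (\<Sum>x'\<in>UNIV. \<Sum>y'\<in>UNIV. \<Sum>x\<in>UNIV. \<Sum>y\<in>UNIV.
          claw pi0 P t x y * P t x y x' y' * D x' y')"
    by (simp add: sum_distrib_right)
  also have "\<dots> = (\<Sum>x\<in>UNIV. \<Sum>y\<in>UNIV. \<Sum>x'\<in>UNIV. \<Sum>y'\<in>UNIV.
          claw pi0 P t x y * P t x y x' y' * D x' y')"
    by (rule quad_swap[symmetric])
  also have "\<dots> = ev (claw pi0 P t) (\<lambda>x y. ev (P t x y) D)"
    by (simp add: sum_distrib_left mult.assoc)
  finally show ?thesis .
qed

lemma claw_coupling: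
  assumes pi0: "coupling pi0 muX muY"
    and P: "\<And>t x y. coupling (P t x y) (mX x) (mY y)"
    and sX: "stationary mX muX" and sY: "stationary mY muY"
  shows "coupling (claw pi0 P t) muX muY"
proof (induction t)
  case 0 then show ?case using pi0 by simp
next
  case (Suc t)
  have nn: "0 \<le> claw pi0 P (Suc t) x' y'" for x' y'
    using Suc P unfolding coupling_def by (auto intro!: sum_nonneg)
  have row: "(\<Sum>y'\<in>UNIV. claw pi0 P (Suc t) x' y') = muX x'" for x'
  proof -
    have "(\<Sum>y'\<in>UNIV. claw pi0 P (Suc t) x' y') =
          (\<Sum>y'\<in>UNIV. \<Sum>x\<in>UNIV. \<Sum>y\<in>UNIV. claw pi0 P t x y * P t x y x' y')" by simp
    also have "\<dots> = (\<Sum>x\<in>UNIV. \<Sum>y'\<in>UNIV. \<Sum>y\<in>UNIV. claw pi0 P t x y * P t x y x' y')"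
      by (rule sum.swap)
    also have "\<dots> = (\<Sum>x\<in>UNIV. \<Sum>y\<in>UNIV. \<Sum>y'\<in>UNIV. claw pi0 P t x y * P t x y x' y')"
      by (rule sum.cong[OF refl], rule sum.swap)
    also have "\<dots> = (\<Sum>x\<in>UNIV. \<Sum>y\<in>UNIV. claw pi0 P t x y * mX x x')"
      using P unfolding coupling_def by (simp add: sum_distrib_left[symmetric])
    also have "\<dots> = (\<Sum>x\<in>UNIV. muX x * mX x x')"
      using Suc unfolding coupling_def by (simp add: sum_distrib_right[symmetric])
    also have "\<dots> = muX x'" using sX unfolding stationary_def by simp
    finally show ?thesis .
  qed
  have col: "(\<Sum>x'\<in>UNIV. claw pi0 P (Suc t) x' y') = muY y'" for y'
  proof -
    have "(\<Sum>x'\<in>UNIV. claw pi0 P (Suc t) x' y') =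
          (\<Sum>x'\<in>UNIV. \<Sum>x\<in>UNIV. \<Sum>y\<in>UNIV. claw pi0 P t x y * P t x y x' y')" by simp
    also have "\<dots> = (\<Sum>x\<in>UNIV. \<Sum>x'\<in>UNIV. \<Sum>y\<in>UNIV. claw pi0 P t x y * P t x y x' y')"
      by (rule sum.swap)
    also have "\<dots> = (\<Sum>x\<in>UNIV. \<Sum>y\<in>UNIV. \<Sum>x'\<in>UNIV. claw pi0 P t x y * P t x y x' y')"
      by (rule sum.cong[OF refl], rule sum.swap)
    also have "\<dots> = (\<Sum>x\<in>UNIV. \<Sum>y\<in>UNIV. claw pi0 P t x y * mY y y')"
      using P unfolding coupling_def by (simp add: sum_distrib_left[symmetric])
    also have "\<dots> = (\<Sum>y\<in>UNIV. \<Sum>x\<in>UNIV. claw pi0 P t x y * mY y y')"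
      by (rule sum.swap)
    also have "\<dots> = (\<Sum>y\<in>UNIV. muY y * mY y y')"
      using Suc unfolding coupling_def by (simp add: sum_distrib_right[symmetric])
    also have "\<dots> = muY y'" using sY unfolding stationary_def by simp
    finally show ?thesis .
  qed
  show ?case unfolding coupling_def using nn row col by blast
qed

lemma claw_lower:
  assumes mk: "markov_kernel mX" "markov_kernel mY"
    and sX: "stationary mX muX" and sY: "stationary mY muY"
    and mc: "markovian_coupling mX muX mY muY pi0 P"
  shows "ev pi0 (Citer mX mY D n) \<le> ev (claw pi0 P n) D"
proof -
  have pi0: "coupling pi0 muX muY" and P: "\<And>t x y. coupling (P t x y) (mX x) (mY y)"
    using mc unfolding markovian_coupling_def by auto
  have "j \<le> n \<Longrightarrow> ev pi0 (Citer mX mY D n) \<le> ev (claw pi0 P j) (Citer mX mY D (n - j))" for j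
  proof (induction j)
    case 0 then show ?case by simp
  next
    case (Suc j)
    have nj: "n - j = Suc (n - Suc j)" using Suc.prems by simp
    have cj: "coupling (claw pi0 P j) muX muY" by (rule claw_coupling[OF pi0 P sX sY])
    have "ev pi0 (Citer mX mY D n) \<le> ev (claw pi0 P j) (Citer mX mY D (n - j))"
      using Suc by simp
    also have "\<dots> = ev (claw pi0 P j) (\<lambda>x y. dW (mX x) (mY y) (Citer mX mY D (n - Suc j)))"
      unfolding nj by simp
    also have "\<dots> \<le> ev (claw pi0 P j) (\<lambda>x y. ev (P j x y) (Citer mX mY D (n - Suc j)))"
      using cj unfolding coupling_def
      by (intro sum_mono mult_left_mono dW_le[OF kern_pv[OF mk(1)] P]) auto
    also have "\<dots> = ev (claw pi0 P (Suc j)) (Citer mX mY D (n - Suc j))"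
      by (rule claw_step[symmetric])
    finally show ?case .
  qed
  from this[of n] show ?thesis by simp
qed

lemma claw_upper:
  assumes mk: "markov_kernel mX" "markov_kernel mY"
    and sX: "stationary mX muX" and sY: "stationary mY muY"
    and pi0: "coupling pi0 muX muY" and e: "0 < e"
  shows "\<exists>P. (\<forall>t x y. coupling (P t x y) (mX x) (mY y)) \<and>
     ev (claw pi0 P n) D \<le> ev pi0 (Citer mX mY D n) + real n * e"
proof -
  define Q where "Q E x y = (SOME p. coupling p (mX x) (mY y) \<and> ev p E < dW (mX x) (mY y) E + e)" for E x y
  have Q: "coupling (Q E x y) (mX x) (mY y) \<and> ev (Q E x y) E < dW (mX x) (mY y) E + e" for E x y
  proof -
    have ex: "\<exists>p. coupling p (mX x) (mY y) \<and> ev p E < dW (mX x) (mY y) E + e"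
      by (rule dW_eps[OF kern_pv[OF mk(1)] kern_pv[OF mk(2)] e])
    show ?thesis unfolding Q_def by (rule someI_ex[OF ex])
  qed
  define P where "P t = Q (Citer mX mY D (n - Suc t))" for t
  have P: "\<And>t x y. coupling (P t x y) (mX x) (mY y)" unfolding P_def using Q by blast
  have "j \<le> n \<Longrightarrow> ev (claw pi0 P j) (Citer mX mY D (n - j)) \<le> ev pi0 (Citer mX mY D n) + real j * e" for j
  proof (induction j)
    case 0 then show ?case by simp
  next
    case (Suc j)
    have nj: "n - j = Suc (n - Suc j)" using Suc.prems by simp
    have cj: "coupling (claw pi0 P j) muX muY" by (rule claw_coupling[OF pi0 P sX sY])
    have pvX: "prob_vec muX" using sX unfolding stationary_def by simp
    have "ev (claw pi0 P (Suc j)) (Citer mX mY D (n - Suc j)) =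
          ev (claw pi0 P j) (\<lambda>x y. ev (P j x y) (Citer mX mY D (n - Suc j)))"
      by (rule claw_step)
    also have "\<dots> \<le> ev (claw pi0 P j) (\<lambda>x y. dW (mX x) (mY y) (Citer mX mY D (n - Suc j)) + e)"
      using cj Q unfolding coupling_def P_def
      by (intro sum_mono mult_left_mono) (auto intro: less_imp_le)
    also have "\<dots> = ev (claw pi0 P j) (\<lambda>x y. dW (mX x) (mY y) (Citer mX mY D (n - Suc j))) + e"
      by (rule ev_add_const[OF cj pvX])
    also have "\<dots> = ev (claw pi0 P j) (Citer mX mY D (n - j)) + e"
      unfolding nj by simp
    also have "\<dots> \<le> ev pi0 (Citer mX mY D n) + real (Suc j) * e"
      using Suc by (simp add: algebra_simps)
    finally show ?case .
  qed
  from this[of n] P show ?thesis by auto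
qed


lemma lo_mono:
  assumes "markov_kernel mX" "markov_kernel mY" "k \<le> l"
  shows "lo (Citer mX mY D k) \<le> lo (Citer mX mY D l)"
  using lift_Suc_mono_le[of "\<lambda>k. lo (Citer mX mY D k)", OF Citer_lo[OF assms(1,2)] assms(3)] .

lemma hi_mono:
  assumes "markov_kernel mX" "markov_kernel mY" "k \<le> l"
  shows "hi (Citer mX mY D l) \<le> hi (Citer mX mY D k)"
  using lift_Suc_antimono_le[of "\<lambda>k. hi (Citer mX mY D k)", OF Citer_hi[OF assms(1,2)] assms(3)] .

lemma span_contract:
  assumes mk: "markov_kernel mX" "markov_kernel mY"
    and dl: "\<And>x x' y y'. \<delta> \<le> mpow mX n x x' * mpow mY n y y'"
  shows "hi (Citer mX mY D n) - lo (Citer mX mY D n) \<le> (1 - \<delta>) * (hi D - lo D)"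
proof -
  obtain i j where ij: "Citer mX mY D n i j = hi (Citer mX mY D n)" using hi_ex by blast
  obtain x0 y0 where xy0: "D x0 y0 = lo D" using lo_ex by blast
  let ?p = "\<lambda>x y. mpow mX n i x * mpow mY n j y"
  have pvi: "prob_vec (mpow mX n i)" unfolding prob_vec_def using mpow_row[OF mk(1)] mpow_nonneg[OF mk(1)] by simp
  have pvj: "prob_vec (mpow mY n j)" unfolding prob_vec_def using mpow_row[OF mk(2)] mpow_nonneg[OF mk(2)] by simp
  have cp: "coupling ?p (mpow mX n i) (mpow mY n j)" by (rule indep_coupling[OF pvi pvj])
  have pnn: "0 \<le> ?p x y" for x y using mk by (simp add: mpow_nonneg)
  have "?p x0 y0 * (hi D - D x0 y0) \<le> (\<Sum>y\<in>UNIV. ?p x0 y * (hi D - D x0 y))"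
    by (rule member_le_sum) (auto intro!: mult_nonneg_nonneg pnn simp: hi_ge)
  also have "\<dots> \<le> ev ?p (\<lambda>x y. hi D - D x y)"
    by (rule member_le_sum[where f="\<lambda>x. \<Sum>y\<in>UNIV. ?p x y * (hi D - D x y)"])
       (auto intro!: sum_nonneg mult_nonneg_nonneg pnn simp: hi_ge)
  finally have A: "?p x0 y0 * (hi D - lo D) \<le> ev ?p (\<lambda>x y. hi D - D x y)" using xy0 by simp
  have B: "\<delta> * (hi D - lo D) \<le> ?p x0 y0 * (hi D - lo D)"
    by (rule mult_right_mono[OF dl]) (use lo_le[of D x0 y0] hi_ge[of D x0 y0] in simp)
  have "ev ?p (\<lambda>x y. hi D - D x y) = ev ?p (\<lambda>x y. hi D) - ev ?p D"
    by (simp add: right_diff_distrib sum_subtractf)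
  also have "\<dots> = hi D - ev ?p D" using ev_const[OF cp pvi] by simp
  finally have C: "ev ?p D \<le> hi D - \<delta> * (hi D - lo D)" using A B by linarith
  have "hi (Citer mX mY D n) \<le> ev ?p D" using ij Citer_indep[OF mk, of D n i j] by simp
  moreover have "lo D \<le> lo (Citer mX mY D n)" using lo_mono[OF mk, of 0 n D] by simp
  ultimately show ?thesis using C by (simp add: algebra_simps)
qed

lemma dWL_bounds:
  assumes mk: "markov_kernel mX" "markov_kernel mY"
    and sX: "stationary mX muX" and sY: "stationary mY muY"
  shows "lo (Citer mX mY C k) \<le> dWL_inf mX muX mY muY C \<and> dWL_inf mX muX mY muY C \<le> hi (Citer mX mY C k)"
proof -
  have pvX: "prob_vec muX" and pvY: "prob_vec muY" using sX sY unfolding stationary_def by auto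
  define S where "S m = {ev (claw pi0 P m) C | pi0 P. markovian_coupling mX muX mY muY pi0 P}" for m
  have W: "dWL_k m mX muX mY muY C = Inf (S m)" for m unfolding dWL_k_def S_def by simp
  let ?pi = "\<lambda>x y. muX x * muY y"
  let ?P = "\<lambda>t x y x' y'. mX x x' * mY y y'"
  have cpi: "coupling ?pi muX muY" by (rule indep_coupling[OF pvX pvY])
  have cP: "\<And>t x y. coupling (?P t x y) (mX x) (mY y)" by (rule indep_coupling[OF kern_pv[OF mk(1)] kern_pv[OF mk(2)]])
  have mc0: "markovian_coupling mX muX mY muY ?pi ?P" unfolding markovian_coupling_def using cpi cP by blast
  have ne: "S m \<noteq> {}" for m
  proof -
    have "ev (claw ?pi ?P m) C \<in> S m" unfolding S_def using mc0 by blast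
    then show ?thesis by blast
  qed
  have low: "lo (Citer mX mY C m) \<le> z" if zS: "z \<in> S m" for z m
  proof -
    obtain pi0 P where z: "z = ev (claw pi0 P m) C" and mc: "markovian_coupling mX muX mY muY pi0 P"
      using zS unfolding S_def by blast
    have "lo (Citer mX mY C m) \<le> ev pi0 (Citer mX mY C m)"
      using mc unfolding markovian_coupling_def by (intro ev_lower[OF _ pvX lo_le]) auto
    also have "\<dots> \<le> z" unfolding z by (rule claw_lower[OF mk sX sY mc])
    finally show ?thesis .
  qed
  have bdd: "bdd_below (S m)" for m unfolding bdd_below_def using low by blast
  have Wlow: "lo (Citer mX mY C m) \<le> dWL_k m mX muX mY muY C" for m
    unfolding W by (rule cInf_greatest[OF ne]) (rule low)
  have Wup0: "dWL_k m mX muX mY muY C \<le> hi (Citer mX mY C K) + real K * e" if mK: "m \<le> K" and e0: "0 < e" for m K e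
  proof -
    obtain P1 where P1: "\<forall>t x y. coupling (P1 t x y) (mX x) (mY y)"
      and e1: "ev (claw ?pi P1 (K - m)) (Citer mX mY C m) \<le> ev ?pi (Citer mX mY (Citer mX mY C m) (K - m)) + real (K - m) * e"
      using claw_upper[OF mk sX sY cpi e0] by blast
    have "Citer mX mY (Citer mX mY C m) (K - m) = Citer mX mY C K" using mK by (simp add: Citer_add)
    moreover have "ev ?pi (Citer mX mY C K) \<le> hi (Citer mX mY C K)" by (rule ev_upper[OF cpi pvX hi_ge])
    ultimately have e1': "ev (claw ?pi P1 (K - m)) (Citer mX mY C m) \<le> hi (Citer mX mY C K) + real (K - m) * e"
      using e1 by simp
    define pi1 where "pi1 = claw ?pi P1 (K - m)"
    have cpi1: "coupling pi1 muX muY" unfolding pi1_def by (rule claw_coupling[OF cpi _ sX sY]) (use P1 in blast)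
    obtain P2 where P2: "\<forall>t x y. coupling (P2 t x y) (mX x) (mY y)"
      and e2: "ev (claw pi1 P2 m) C \<le> ev pi1 (Citer mX mY C m) + real m * e"
      using claw_upper[OF mk sX sY cpi1 e0] by blast
    have mc: "markovian_coupling mX muX mY muY pi1 P2" unfolding markovian_coupling_def using cpi1 P2 by blast
    have "dWL_k m mX muX mY muY C \<le> ev (claw pi1 P2 m) C"
      unfolding W by (rule cInf_lower[OF _ bdd]) (unfold S_def, use mc in blast)
    also have "\<dots> \<le> hi (Citer mX mY C K) + real (K - m) * e + real m * e"
      using e2 e1' unfolding pi1_def by simp
    also have "\<dots> = hi (Citer mX mY C K) + real K * e" using mK by (simp add: algebra_simps of_nat_diff)
    finally show ?thesis .
  qed
  have Wup: "dWL_k m mX muX mY muY C \<le> hi (Citer mX mY C K)" if "m \<le> K" for m K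
  proof (rule field_le_epsilon)
    fix e :: real assume e: "0 < e"
    have "dWL_k m mX muX mY muY C \<le> hi (Citer mX mY C K) + real K * (e / (real K + 1))"
      using Wup0[OF that, of "e / (real K + 1)"] e by simp
    also have "real K * (e / (real K + 1)) \<le> e" using e by (simp add: field_simps)
    finally show "dWL_k m mX muX mY muY C \<le> hi (Citer mX mY C K) + e" by simp
  qed
  have Wk: "dWL_k m mX muX mY muY C \<le> hi (Citer mX mY C k)" for m
  proof (cases "m \<le> k")
    case True then show ?thesis by (rule Wup)
  next
    case False
    then show ?thesis using Wup[of m m] hi_mono[OF mk, of k m C] by simp
  qed
  have bdda: "bdd_above (range (\<lambda>m. dWL_k m mX muX mY muY C))"
    unfolding bdd_above_def using Wk[of _] by blast
  have "lo (Citer mX mY C k) \<le> dWL_k k mX muX mY muY C" by (rule Wlow)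
  also have "\<dots> \<le> dWL_inf mX muX mY muY C" unfolding dWL_inf_def by (rule cSUP_upper[OF _ bdda]) simp
  finally have L: "lo (Citer mX mY C k) \<le> dWL_inf mX muX mY muY C" .
  have U: "dWL_inf mX muX mY muY C \<le> hi (Citer mX mY C k)"
    unfolding dWL_inf_def by (rule cSUP_least) (auto intro: Wk)
  show ?thesis using L U by blast
qed


lemma pm_nonneg: "pseudometric d \<Longrightarrow> 0 \<le> d x y"
proof -
  assume pm: "pseudometric d"
  have "d x x \<le> d x y + d y x" "d x x = 0" "d y x = d x y" using pm unfolding pseudometric_def by blast+
  then show ?thesis by linarith
qed

lemma sup_norm_ge: "\<bar>C i j\<bar> \<le> sup_norm (C::'a::finite \<Rightarrow> 'b::finite \<Rightarrow> real)"
proof -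
  have eq: "{\<bar>C i j\<bar> | i j. True} = (\<lambda>(i,j). \<bar>C i j\<bar>) ` UNIV" by auto
  show ?thesis unfolding sup_norm_def eq by (rule Max_ge) auto
qed

theorem theorem27:
  fixes mX mY :: "'a::finite \<Rightarrow> 'a \<Rightarrow> real" and muX muY :: "'a \<Rightarrow> real"
  assumes "markov_kernel mX" and "markov_kernel mY"
    and "irreducible_kernel mX" and "aperiodic_kernel mX"
    and "irreducible_kernel mY" and "aperiodic_kernel mY"
    and "stationary mX muX" and "\<forall>\<nu>. stationary mX \<nu> \<longrightarrow> \<nu> = muX"
    and "stationary mY muY" and "\<forall>\<nu>. stationary mY \<nu> \<longrightarrow> \<nu> = muY"
  shows "\<exists>\<rho>::real. 0 \<le> \<rho> \<and> \<rho> < 1 \<and>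
    (\<forall>d. pseudometric d \<longrightarrow>
       (\<forall>k i j. \<bar>Citer mX mY d k i j - dWL_inf mX muX mY muY d\<bar> \<le> 2 * \<rho> ^ k * sup_norm d))"
proof -
  note mk = assms(1,2)
  note sX = assms(7) and sY = assms(9)
  obtain N1 where N1: "\<forall>n\<ge>N1. \<forall>x y. 0 < mpow mX n x y" using primitive[OF assms(1,3,4)] by blast
  obtain N2 where N2: "\<forall>n\<ge>N2. \<forall>x y. 0 < mpow mY n x y" using primitive[OF assms(2,5,6)] by blast
  define n where "n = max N1 N2 + 1"
  have npos: "0 < n" unfolding n_def by simp
  have "N1 \<le> n" "N2 \<le> n" unfolding n_def by simp_all
  then have posX: "0 < mpow mX n x y" and posY: "0 < mpow mY n x y" for x y using N1 N2 by blast+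
  have loX: "0 < lo (mpow mX n)" using lo_ex[of "mpow mX n"] posX by metis
  have loY: "0 < lo (mpow mY n)" using lo_ex[of "mpow mY n"] posY by metis
  define \<delta> where "\<delta> = min (1/2) (lo (mpow mX n) * lo (mpow mY n))"
  have dpos: "0 < \<delta>" unfolding \<delta>_def using loX loY by simp
  have dhalf: "\<delta> \<le> 1/2" unfolding \<delta>_def by simp
  have dl: "\<delta> \<le> mpow mX n x x' * mpow mY n y y'" for x x' y y'
  proof -
    have "lo (mpow mX n) * lo (mpow mY n) \<le> mpow mX n x x' * mpow mY n y y'"
      by (rule mult_mono[OF lo_le lo_le]) (use loX loY posX in \<open>auto intro: less_imp_le\<close>)
    then show ?thesis unfolding \<delta>_def by simp
  qed
  define \<rho> where "\<rho> = root n (1 - \<delta>)"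
  have r0: "0 \<le> \<rho>" unfolding \<rho>_def using dhalf by (simp add: real_root_ge_zero)
  have rn: "\<rho> ^ n = 1 - \<delta>" unfolding \<rho>_def using dhalf npos by simp
  have r1: "\<rho> < 1" unfolding \<rho>_def using dpos npos by simp
  have pw: "(1 - \<delta>) ^ (k div n) \<le> 2 * \<rho> ^ k" for k
  proof -
    have "\<rho> ^ k = \<rho> ^ (n * (k div n) + k mod n)" by simp
    also have "\<dots> = (\<rho> ^ n) ^ (k div n) * \<rho> ^ (k mod n)"
      by (simp only: power_add power_mult)
    also have "\<dots> = (1 - \<delta>) ^ (k div n) * \<rho> ^ (k mod n)"
      by (simp only: rn)
    finally have eq: "\<rho> ^ k = (1 - \<delta>) ^ (k div n) * \<rho> ^ (k mod n)" .
    have "\<rho> ^ n \<le> \<rho> ^ (k mod n)"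
      by (rule power_decreasing) (use npos r0 r1 in auto)
    then have "1/2 \<le> \<rho> ^ (k mod n)" using rn dhalf by simp
    then have "(1 - \<delta>) ^ (k div n) * (1/2) \<le> (1 - \<delta>) ^ (k div n) * \<rho> ^ (k mod n)"
      by (rule mult_left_mono) (use dhalf in simp)
    then show ?thesis using eq by simp
  qed
  show ?thesis
  proof (intro exI[of _ \<rho>] conjI allI impI)
    show "0 \<le> \<rho>" by (rule r0)
    show "\<rho> < 1" by (rule r1)
    fix d :: "'a \<Rightarrow> 'a \<Rightarrow> real" and k i j
    assume pm: "pseudometric d"
    define s where "s k = hi (Citer mX mY d k) - lo (Citer mX mY d k)" for k
    have s_anti: "s k \<le> s m" if "m \<le> k" for m k
      unfolding s_def using hi_mono[OF mk that, of d] lo_mono[OF mk that, of d] by simp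
    have s_q: "s (q * n) \<le> (1 - \<delta>) ^ q * s 0" for q
    proof (induction q)
      case 0 then show ?case by simp
    next
      case (Suc q)
      have "Citer mX mY (Citer mX mY d (q * n)) n = Citer mX mY d (Suc q * n)"
        by (simp add: Citer_add)
      then have "s (Suc q * n) \<le> (1 - \<delta>) * s (q * n)"
        using span_contract[OF mk dl, of "Citer mX mY d (q * n)"] unfolding s_def by simp
      also have "\<dots> \<le> (1 - \<delta>) * ((1 - \<delta>) ^ q * s 0)"
        by (rule mult_left_mono[OF Suc]) (use dhalf in simp)
      finally show ?case by simp
    qed
    have sk: "s k \<le> (1 - \<delta>) ^ (k div n) * s 0"
    proof -
      have "k div n * n \<le> k" using div_mult_mod_eq[of k n] by linarith
      then have "s k \<le> s (k div n * n)" by (rule s_anti)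
      then show ?thesis using s_q[of "k div n"] by simp
    qed
    have dnn: "0 \<le> d x y" for x y by (rule pm_nonneg[OF pm])
    have s0: "s 0 \<le> sup_norm d"
    proof -
      obtain x y where "d x y = hi d" using hi_ex by blast
      then have "hi d \<le> sup_norm d" using sup_norm_ge[of d x y] dnn[of x y] by simp
      moreover obtain x' y' where "d x' y' = lo d" using lo_ex by blast
      then have "0 \<le> lo d" using dnn by metis
      ultimately show ?thesis unfolding s_def by simp
    qed
    have s0nn: "0 \<le> s 0" unfolding s_def using lo_le[of d i j] hi_ge[of d i j] by simp
    have B: "lo (Citer mX mY d k) \<le> dWL_inf mX muX mY muY d \<and> dWL_inf mX muX mY muY d \<le> hi (Citer mX mY d k)"
      by (rule dWL_bounds[OF mk sX sY])
    have "\<bar>Citer mX mY d k i j - dWL_inf mX muX mY muY d\<bar> \<le> s k"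
      unfolding s_def using B lo_le[of "Citer mX mY d k" i j] hi_ge[of "Citer mX mY d k" i j] by linarith
    also have "\<dots> \<le> (1 - \<delta>) ^ (k div n) * s 0" by (rule sk)
    also have "\<dots> \<le> (2 * \<rho> ^ k) * s 0" by (rule mult_right_mono[OF pw s0nn])
    also have "\<dots> \<le> (2 * \<rho> ^ k) * sup_norm d" by (rule mult_left_mono[OF s0]) (use r0 in simp)
    finally show "\<bar>Citer mX mY d k i j - dWL_inf mX muX mY muY d\<bar> \<le> 2 * \<rho> ^ k * sup_norm d" .
  qed
qed

end
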